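(* Let $\mathcal I$ be an inference family on a finite hypergraph $H=(V,F)$, let $\boldsymbol\eta\in L$ with pseudomarginals $b_\alpha,b_i$, and for $\alpha\in F$ and distinct $i,j\in\alpha$ let $u^\alpha_{i\to j}=\mathrm{Var}_{b_j}(\phi_j)^{-1}\mathrm{Cov}_{b_\alpha}(\phi_j,\phi_i)$ and $$c^\alpha_{i\to j}:=\mathrm{Var}_{b_\alpha}(\phi_j)^{-1/2}\mathrm{Cov}_{b_\alpha}(\phi_j,\phi_i)\mathrm{Var}_{b_\alpha}(\phi_i)^{-1/2}.$$ Then $\mathcal M(\boldsymbol u)$ and $\mathcal M(\boldsymbol c)$ have the same set of eigenvalues.
   Context: Hypergraph notation: directed edges $\vec E=\{(\alpha\to i):i\in\alpha\in F\}$ with $s(\alpha\to i)=\alpha$, $t(\alpha\to i)=i$; $e'\rightharpoonup e$ means $t(e')\in s(e)$, $t(e')\ne t(e)$, $s(e')\ne s(e)$. For weights $\boldsymbol v=\{v^\alpha_{i\to j}\}$ with $v^\alpha_{i\to j}\in\mathbb{C}^{r_j\times r_i}$, $\mathcal M(\boldsymbol v)$ acts on $\bigoplus_{e}\mathbb{C}^{r_{t(e)}}$ by $(\mathcal M(\boldsymbol v)f)(e)=\sum_{e':e'\rightharpoonup e}v^{s(e)}_{t(e')\to t(e)}f(e')$. Inference family: exponential families $\mathcal E_i$ (statistic $\phi_i\in\mathbb{R}^{r_i}$) and $\mathcal E_\alpha$ on $\prod_{i\in\alpha}\mathcal X_i$ (statistic $(\bar\phi_\alpha,(\phi_i)_{i\in\alpha})$),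 with invertible covariance matrices and marginals of $\mathcal E_\alpha$ onto $x_i$ lying in $\mathcal E_i$. $L$ is the set of expectation parameters $((\eta_\alpha)_\alpha,(\eta_i)_i)$ with $\eta^\alpha_i=\eta_i$ for all $i\in\alpha$ (local consistency), identified with pseudomarginals $b_\alpha\in\mathcal E_\alpha$, $b_i\in\mathcal E_i$; in particular $b_i$ is the $x_i$-marginal of $b_\alpha$. *)

theory Defs
  imports "HOL-Probability.Probability" "Jordan_Normal_Form.Matrix"
begin

definition mat_inv :: "real mat \<Rightarrow> real mat" where
  "mat_inv A = (THE B. B \<in> carrier_mat (dim_row A) (dim_row A) \<and>
                       A * B = 1\<^sub>m (dim_row A) \<and> B * A = 1\<^sub>m (dim_row A))"

definition psd_sqrt :: "real mat \<Rightarrow> real mat" where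
  "psd_sqrt A = (THE B. B \<in> carrier_mat (dim_row A) (dim_row A) \<and> transpose_mat B = B \<and>
        (\<forall>v \<in> carrier_vec (dim_row A). v \<bullet> (B *\<^sub>v v) \<ge> 0) \<and> B * B = A)"

definition inv_sqrt :: "real mat \<Rightarrow> real mat" where
  "inv_sqrt A = mat_inv (psd_sqrt A)"

text \<open>\<open>Cov_b(f,g)\<close> for vector statistics \<open>f\<close> (dimension m) and \<open>g\<close> (dimension n):
  the m x n matrix \<open>E[f g^T] - E[f] E[g]^T\<close>.  \<open>Var_b(f) = Cov_b(f,f)\<close>.\<close>
definition cov_mat :: "'a measure \<Rightarrow> ('a \<Rightarrow> real vec) \<Rightarrow> nat \<Rightarrow> ('a \<Rightarrow> real vec) \<Rightarrow> nat \<Rightarrow> real mat" where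
  "cov_mat b f m g n = mat m n (\<lambda>(k,l).
      (\<integral>x. f x $ k * g x $ l \<partial>b) - (\<integral>x. f x $ k \<partial>b) * (\<integral>x. g x $ l \<partial>b))"

definition in_expfam :: "'a measure \<Rightarrow> ('a \<Rightarrow> real vec) \<Rightarrow> nat \<Rightarrow> 'a measure \<Rightarrow> bool" where
  "in_expfam \<nu> \<phi> d b \<longleftrightarrow> prob_space b \<and>
     (\<exists>\<theta> \<in> carrier_vec d. \<exists>c::real. b = density \<nu> (\<lambda>x. ennreal (exp (\<theta> \<bullet> \<phi> x - c))))"

definition in_expfam_factor ::
  "('v \<Rightarrow> 'x) measure \<Rightarrow> (('v \<Rightarrow> 'x) \<Rightarrow> real vec) \<Rightarrow> nat \<Rightarrow> 'v set \<Rightarrow>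
   ('v \<Rightarrow> 'x \<Rightarrow> real vec) \<Rightarrow> ('v \<Rightarrow> nat) \<Rightarrow> ('v \<Rightarrow> 'x) measure \<Rightarrow> bool" where
  "in_expfam_factor \<nu> \<phi>bar s \<alpha> \<phi> r b \<longleftrightarrow> prob_space b \<and>
     (\<exists>\<theta>0 \<in> carrier_vec s. \<exists>\<theta>. (\<forall>i\<in>\<alpha>. \<theta> i \<in> carrier_vec (r i)) \<and> (\<exists>c::real.
        b = density \<nu> (\<lambda>x. ennreal (exp (\<theta>0 \<bullet> \<phi>bar x + (\<Sum>i\<in>\<alpha>. \<theta> i \<bullet> \<phi> i (x i)) - c)))))"

text \<open>Directed edges \<open>(\<alpha> \<rightarrow> i)\<close>, encoded as pairs \<open>(\<alpha>, i)\<close>; \<open>s = fst\<close>, \<open>t = snd\<close>.\<close>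
definition dedges :: "'v set set \<Rightarrow> ('v set \<times> 'v) set" where
  "dedges F = {(\<alpha>, i). \<alpha> \<in> F \<and> i \<in> \<alpha>}"

definition feeds :: "('v set \<times> 'v) \<Rightarrow> ('v set \<times> 'v) \<Rightarrow> bool" where
  "feeds e' e \<longleftrightarrow> snd e' \<in> fst e \<and> snd e' \<noteq> snd e \<and> fst e' \<noteq> fst e"

text \<open>\<open>(\<M>(w) f)(e) = \<Sum>_{e' \<rightharpoonup> e} w^{s(e)}_{t(e') \<rightarrow> t(e)} f(e')\<close>, with
  \<open>w \<alpha> i j\<close> the \<open>r_j \<times> r_i\<close> matrix \<open>w^\<alpha>_{i\<rightarrow>j}\<close>, and \<open>f e \<in> \<complex>^{r_{t(e)}}\<close>.\<close>
definition M_op :: "'v set set \<Rightarrow> ('v \<Rightarrow> nat) \<Rightarrow> ('v set \<Rightarrow> 'v \<Rightarrow> 'v \<Rightarrow> complex mat) \<Rightarrow>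
    ('v set \<times> 'v \<Rightarrow> complex vec) \<Rightarrow> ('v set \<times> 'v) \<Rightarrow> complex vec" where
  "M_op F r w f e = vec (r (snd e)) (\<lambda>k.
      \<Sum>e' \<in> {e' \<in> dedges F. feeds e' e}. (w (fst e) (snd e') (snd e) *\<^sub>v f e') $ k)"

definition M_eigenvalue :: "'v set set \<Rightarrow> ('v \<Rightarrow> nat) \<Rightarrow> ('v set \<Rightarrow> 'v \<Rightarrow> 'v \<Rightarrow> complex mat) \<Rightarrow>
    complex \<Rightarrow> bool" where
  "M_eigenvalue F r w z \<longleftrightarrow> (\<exists>f.
      (\<forall>e \<in> dedges F. f e \<in> carrier_vec (r (snd e))) \<and>
      (\<exists>e \<in> dedges F. f e \<noteq> 0\<^sub>v (r (snd e))) \<and>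
      (\<forall>e \<in> dedges F. M_op F r w f e = z \<cdot>\<^sub>v f e))"

end

theory Submission imports Defs "Jordan_Normal_Form.Char_Poly" "HOL-Computational_Algebra.Fundamental_Theorem_Algebra" begin
lemma sym_real_ev:
  fixes A :: "real mat"
  assumes A: "A \<in> carrier_mat n n" and sym: "transpose_mat A = A" and n: "n > 0"
  shows "\<exists>e. eigenvalue A e"
proof -
  let ?Ac = "map_mat complex_of_real A"
  have Ac: "?Ac \<in> carrier_mat n n" using A by auto
  have cp: "char_poly ?Ac = map_poly of_real (char_poly A)" using of_real_hom.char_poly_hom[OF A] by simp
  have "degree (char_poly ?Ac) = n" using degree_monic_char_poly[OF Ac] by simp
  hence "\<not> constant (poly (char_poly ?Ac))" using n constant_degree by (metis less_not_refl)
  then obtain z where z: "poly (char_poly ?Ac) z = 0" using fundamental_theorem_of_algebra by blast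
  hence "eigenvalue ?Ac z" using eigenvalue_root_char_poly[OF Ac] by simp
  then obtain v where ev: "eigenvector ?Ac v z" unfolding eigenvalue_def by blast
  hence v: "v \<in> carrier_vec n" "v \<noteq> 0\<^sub>v n" and Av: "?Ac *\<^sub>v v = z \<cdot>\<^sub>v v" using Ac unfolding eigenvector_def by auto
  define s where "s = (\<Sum>k<n. cnj (v$k) * (?Ac *\<^sub>v v) $ k)"
  define N where "N = (\<Sum>k<n. cnj (v$k) * v$k)"
  have s1: "s = z * N" unfolding s_def N_def Av using v by (simp add: sum_distrib_left ac_simps)
  have s2: "s = (\<Sum>k<n. \<Sum>l<n. cnj (v$k) * of_real (A$$(k,l)) * v$l)"
    unfolding s_def using A v by (simp add: scalar_prod_def sum_distrib_left ac_simps atLeast0LessThan)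
  have symA: "\<And>k l. k<n \<Longrightarrow> l<n \<Longrightarrow> A$$(k,l) = A$$(l,k)" using sym A by (metis index_transpose_mat(1) carrier_matD)
  have "cnj s = (\<Sum>k<n. \<Sum>l<n. v$k * of_real (A$$(k,l)) * cnj (v$l))" unfolding s2 by simp
  also have "\<dots> = (\<Sum>l<n. \<Sum>k<n. v$k * of_real (A$$(k,l)) * cnj (v$l))" by (rule sum.swap)
  also have "\<dots> = s" unfolding s2 by (intro sum.cong refl) (simp add: symA ac_simps)
  finally have cs: "cnj s = s" .
  have Nr: "N = of_real (\<Sum>k<n. (cmod (v$k))^2)" unfolding N_def
    by (simp add: complex_norm_square mult.commute del: of_real_power)
  obtain k where k: "k < n" "v $ k \<noteq> 0" using v by (metis eq_vecI carrier_vecD index_zero_vec)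
  have "(\<Sum>k<n. (cmod (v$k))^2) > 0"
    by (rule sum_pos2[of _ k]) (use k in auto)
  hence N0: "N \<noteq> 0" unfolding Nr by (metis of_real_eq_0_iff less_irrefl)
  have cN: "cnj N = N" unfolding Nr by simp
  have zs: "z = s / N" using s1 N0 by simp
  have "cnj z = z" unfolding zs using cs cN by simp
  hence zr: "z = of_real (Re z)" by (metis Reals_cnj_iff complex_is_Real_iff of_real_Re)
  have "of_real (poly (char_poly A) (Re z)) = (0::complex)"
    using z unfolding cp of_real_hom.poly_map_poly[symmetric] using zr by metis
  hence "poly (char_poly A) (Re z) = 0" by simp
  thus ?thesis using eigenvalue_root_char_poly[OF A] by blast
qed

definition ext :: "real \<Rightarrow> real mat \<Rightarrow> real mat" where
  "ext a X = mat (Suc (dim_row X)) (Suc (dim_col X)) (\<lambda>(i,j). if i = 0 then (if j = 0 then a else 0)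
      else if j = 0 then 0 else X $$ (i-1, j-1))"

lemma ext_carrier[simp]: "X \<in> carrier_mat n m \<Longrightarrow> ext a X \<in> carrier_mat (Suc n) (Suc m)"
  unfolding ext_def by auto

lemma ext_dims[simp]: "dim_row (ext a X) = Suc (dim_row X)" "dim_col (ext a X) = Suc (dim_col X)"
  unfolding ext_def by auto

lemma ext_index: "i < Suc (dim_row X) \<Longrightarrow> j < Suc (dim_col X) \<Longrightarrow> ext a X $$ (i,j) =
  (if i = 0 then (if j = 0 then a else 0) else if j = 0 then 0 else X $$ (i-1, j-1))"
  unfolding ext_def by auto

lemma ext_mult: assumes X: "X \<in> carrier_mat n m" and Y: "Y \<in> carrier_mat m k"
  shows "ext a X * ext b Y = ext (a*b) (X*Y)"
proof (rule eq_matI)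
  fix i j assume i: "i < dim_row (ext (a*b) (X*Y))" and j: "j < dim_col (ext (a*b) (X*Y))"
  have "(ext a X * ext b Y) $$ (i,j) = (\<Sum>l<Suc m. ext a X $$ (i,l) * ext b Y $$ (l,j))"
    using i j X Y by (simp add: scalar_prod_def atLeast0LessThan row_def col_def)
  also have "\<dots> = ext a X $$ (i,0) * ext b Y $$ (0,j) + (\<Sum>l<m. ext a X $$ (i,Suc l) * ext b Y $$ (Suc l,j))"
    by (rule sum.lessThan_Suc_shift)
  also have "\<dots> = ext (a*b) (X*Y) $$ (i,j)"
    using i j X Y by (cases i; cases j) (auto simp: ext_index scalar_prod_def atLeast0LessThan row_def col_def)
  finally show "(ext a X * ext b Y) $$ (i,j) = ext (a*b) (X*Y) $$ (i,j)" .
qed (use X Y in auto)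

lemma ext_transpose: "transpose_mat (ext a X) = ext a (transpose_mat X)"
  by (rule eq_matI) (auto simp: ext_index)

lemma ext_one: "ext 1 (1\<^sub>m n) = 1\<^sub>m (Suc n)"
  by (rule eq_matI) (auto simp: ext_index)

lemma ext_diag: "diagonal_mat D \<Longrightarrow> diagonal_mat (ext a D)"
  unfolding diagonal_mat_def by (auto simp: ext_index)

lemma self_sprod_eq: "(v::real vec) \<bullet> v = (\<Sum>k<dim_vec v. (v$k)^2)"
  by (simp add: scalar_prod_def atLeast0LessThan power2_eq_square)

lemma self_sprod_nonneg: "(v::real vec) \<bullet> v \<ge> 0"
  unfolding self_sprod_eq by (simp add: sum_nonneg)

lemma self_sprod_zero: assumes "(v::real vec) \<bullet> v = 0" shows "v = 0\<^sub>v (dim_vec v)"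
proof -
  have "\<forall>k\<in>{..<dim_vec v}. (v$k)^2 = 0"
    using assms unfolding self_sprod_eq by (subst sum_nonneg_eq_0_iff[symmetric]) auto
  thus ?thesis by (intro eq_vecI) auto
qed

definition hhc :: "real vec \<Rightarrow> real" where "hhc u = (if u \<bullet> u = 0 then 0 else 2 / (u \<bullet> u))"

definition hh :: "nat \<Rightarrow> real vec \<Rightarrow> real mat" where
  "hh n u = mat n n (\<lambda>(i,j). (if i = j then 1 else 0) - hhc u * u$i * u$j)"

lemma hh_carrier[simp]: "hh n u \<in> carrier_mat n n" unfolding hh_def by auto

lemma hh_dims[simp]: "dim_row (hh n u) = n" "dim_col (hh n u) = n" unfolding hh_def by auto

lemma hh_transpose: "transpose_mat (hh n u) = hh n u"
  unfolding hh_def by (rule eq_matI) auto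

lemma hhc_sq: "hhc u ^ 2 * (u \<bullet> u) = 2 * hhc u"
  unfolding hhc_def by (auto simp: power2_eq_square)

lemma hh_sq: assumes u: "u \<in> carrier_vec n" shows "hh n u * hh n u = 1\<^sub>m n"
proof (rule eq_matI)
  fix i j assume i: "i < dim_row (1\<^sub>m n :: real mat)" and j: "j < dim_col (1\<^sub>m n :: real mat)"
  let ?c = "hhc u"
  define d where "d = (\<lambda>a b::nat. if a = b then 1 else (0::real))"
  have "(hh n u * hh n u) $$ (i,j) = (\<Sum>k<n. (d i k - ?c*u$i*u$k) * (d k j - ?c*u$k*u$j))"
    using i j by (simp add: hh_def scalar_prod_def atLeast0LessThan row_def col_def d_def)
  also have "\<dots> = (\<Sum>k<n. d i k * d k j) - ?c*(\<Sum>k<n. d i k * u$k)*u$j - ?c*u$i*(\<Sum>k<n. u$k * d k j)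
     + ?c^2*u$i*u$j*(\<Sum>k<n. u$k*u$k)"
    by (simp add: sum_subtractf sum.distrib sum_distrib_left sum_distrib_right algebra_simps power2_eq_square)
  also have "(\<Sum>k<n. d i k * d k j) = (\<Sum>k<n. if k = i then d i j else 0)"
    by (intro sum.cong) (auto simp: d_def)
  also have "\<dots> = d i j" using i by simp
  also have "(\<Sum>k<n. d i k * u$k) = (\<Sum>k<n. if k = i then u$i else 0)"
    by (intro sum.cong) (auto simp: d_def)
  also have "\<dots> = u$i" using i by simp
  also have "(\<Sum>k<n. u$k * d k j) = (\<Sum>k<n. if k = j then u$j else 0)"
    by (intro sum.cong) (auto simp: d_def)
  also have "\<dots> = u$j" using j by simp
  also have "(\<Sum>k<n. u$k*u$k) = u \<bullet> u" using u by (simp add: scalar_prod_def atLeast0LessThan)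
  also have "d i j - ?c * u $ i * u $ j - ?c * u $ i * u $ j + ?c\<^sup>2 * u $ i * u $ j * (u \<bullet> u) = d i j"
    using hhc_sq[of u] by (simp add: algebra_simps)
  finally show "(hh n u * hh n u) $$ (i,j) = 1\<^sub>m n $$ (i,j)" using i j by (simp add: d_def)
qed auto

lemma hh_e0: fixes w :: "real vec" assumes w: "w \<in> carrier_vec n" and n: "n > 0" and ww: "w \<bullet> w = 1"
  shows "hh n (w - unit_vec n 0) *\<^sub>v unit_vec n 0 = w"
proof (rule eq_vecI)
  let ?u = "w - unit_vec n 0"
  have u: "?u \<in> carrier_vec n" using w by auto
  have e: "unit_vec n 0 \<in> carrier_vec n" by simp
  have uu: "?u \<bullet> ?u = 2 - 2 * w$0"
    using w n ww e
    by (simp add: minus_scalar_prod_distrib[OF w e u] scalar_prod_minus_distrib[OF w w e]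
        scalar_prod_minus_distrib[OF e w e] comm_scalar_prod[OF e w])
  fix i assume i: "i < dim_vec w"
  hence i': "i < n" using w by auto
  have lhs: "(hh n ?u *\<^sub>v unit_vec n 0) $ i = (if i = 0 then 1 else 0) - hhc ?u * ?u$i * ?u$0"
    using i' n by (simp add: hh_def)
  show "(hh n ?u *\<^sub>v unit_vec n 0) $ i = w $ i"
  proof (cases "?u \<bullet> ?u = 0")
    case True
    hence "?u = 0\<^sub>v n" using self_sprod_zero[of ?u] u by auto
    hence "?u $ i = 0" using i' by simp
    thus ?thesis unfolding lhs using True i' w by (auto simp: hhc_def)
  next
    case False
    hence "hhc ?u * ?u$0 = -1" unfolding hhc_def using uu n w by (auto simp: field_simps)
    hence "hhc ?u * ?u$i * ?u$0 = - ?u$i" by (metis mult.assoc mult.commute mult_minus1_right)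
    thus ?thesis unfolding lhs using i' w n by auto
  qed
qed (use w in auto)


lemma spectral:
  fixes A :: "real mat"
  assumes "A \<in> carrier_mat n n" "transpose_mat A = A"
  shows "\<exists>Q \<in> carrier_mat n n. transpose_mat Q * Q = 1\<^sub>m n \<and> diagonal_mat (transpose_mat Q * A * Q)"
  using assms
proof (induction n arbitrary: A)
  case 0
  show ?case by (intro bexI[of _ "1\<^sub>m 0"]) (use 0 in \<open>auto simp: diagonal_mat_def\<close>)
next
  case (Suc n A)
  have A: "A \<in> carrier_mat (Suc n) (Suc n)" and sym: "transpose_mat A = A" using Suc.prems by auto
  obtain e where "eigenvalue A e" using sym_real_ev[OF A sym] by auto
  then obtain v where ev: "eigenvector A v e" unfolding eigenvalue_def by blast
  hence v: "v \<in> carrier_vec (Suc n)" "v \<noteq> 0\<^sub>v (Suc n)" and Av: "A *\<^sub>v v = e \<cdot>\<^sub>v v"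
    using A unfolding eigenvector_def by auto
  have vv: "v \<bullet> v > 0" using self_sprod_nonneg[of v] self_sprod_zero[of v] v by force
  define w where "w = (1 / sqrt (v \<bullet> v)) \<cdot>\<^sub>v v"
  have w: "w \<in> carrier_vec (Suc n)" unfolding w_def using v by auto
  have ww: "w \<bullet> w = 1" unfolding w_def using v vv
    by (simp add: smult_scalar_prod_distrib scalar_prod_smult_distrib[OF v(1) v(1)] power2_eq_square[symmetric])
  have Aw: "A *\<^sub>v w = e \<cdot>\<^sub>v w" unfolding w_def using A v Av
    by (simp add: mult_mat_vec smult_smult_assoc mult.commute)
  define H where "H = hh (Suc n) (w - unit_vec (Suc n) 0)"
  have H: "H \<in> carrier_mat (Suc n) (Suc n)" and HT: "transpose_mat H = H"
    and HH: "H * H = 1\<^sub>m (Suc n)" and He: "H *\<^sub>v unit_vec (Suc n) 0 = w"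
    unfolding H_def using hh_transpose hh_sq hh_e0[OF w _ ww] w by auto
  have Hw: "H *\<^sub>v w = unit_vec (Suc n) 0"
    using He[symmetric] H HH by (metis assoc_mult_mat_vec one_mult_mat_vec unit_vec_carrier)
  define C where "C = H * A * H"
  have C: "C \<in> carrier_mat (Suc n) (Suc n)" unfolding C_def using H A by auto
  have CT: "transpose_mat C = C" unfolding C_def using H A HT sym
    by (simp add: transpose_mult[of _ "Suc n" "Suc n" _ "Suc n"] assoc_mult_mat[of _ "Suc n" "Suc n" _ "Suc n" _ "Suc n"])
  have Ce: "C *\<^sub>v unit_vec (Suc n) 0 = e \<cdot>\<^sub>v unit_vec (Suc n) 0"
  proof -
    have "C *\<^sub>v unit_vec (Suc n) 0 = H *\<^sub>v (A *\<^sub>v (H *\<^sub>v unit_vec (Suc n) 0))"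
      unfolding C_def using H A
      by (simp add: assoc_mult_mat_vec[of "H*A" "Suc n" "Suc n" H "Suc n"] assoc_mult_mat_vec[of H "Suc n" "Suc n" A "Suc n"] del: assoc_mult_mat)
    also have "\<dots> = e \<cdot>\<^sub>v unit_vec (Suc n) 0" using He Aw Hw H w by (simp add: mult_mat_vec)
    finally show ?thesis .
  qed
  have Ck0: "C $$ (k,0) = (if k = 0 then e else 0)" if k: "k < Suc n" for k
  proof -
    have "C $$ (k,0) = (C *\<^sub>v unit_vec (Suc n) 0) $ k" using C k by (simp add: row_def)
    thus ?thesis unfolding Ce using k by simp
  qed
  have C0k: "C $$ (0,k) = (if k = 0 then e else 0)" if k: "k < Suc n" for k
    using Ck0[OF k] CT C k by (metis index_transpose_mat(1) carrier_matD zero_less_Suc)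
  define C3 where "C3 = mat n n (\<lambda>(i,j). C $$ (Suc i, Suc j))"
  have C3: "C3 \<in> carrier_mat n n" unfolding C3_def by auto
  have C3T: "transpose_mat C3 = C3" unfolding C3_def
    by (rule eq_matI) (use CT C in \<open>auto, metis Suc_less_eq carrier_matD index_transpose_mat(1)\<close>)
  have Cext: "C = ext e C3"
    by (rule eq_matI) (use C C3 Ck0 C0k in \<open>auto simp: ext_index C3_def split: nat.splits\<close>)
  obtain Q3 where Q3: "Q3 \<in> carrier_mat n n" and Q3O: "transpose_mat Q3 * Q3 = 1\<^sub>m n"
    and Q3d: "diagonal_mat (transpose_mat Q3 * C3 * Q3)" using Suc.IH[OF C3 C3T] by blast
  define E where "E = ext 1 Q3"
  have E: "E \<in> carrier_mat (Suc n) (Suc n)" unfolding E_def using Q3 by auto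
  have ET: "transpose_mat E = ext 1 (transpose_mat Q3)" unfolding E_def by (rule ext_transpose)
  define Q where "Q = H * E"
  have Q: "Q \<in> carrier_mat (Suc n) (Suc n)" unfolding Q_def using H E by auto
  have QT: "transpose_mat Q = transpose_mat E * H" unfolding Q_def using H E HT
    by (simp add: transpose_mult[of _ "Suc n" "Suc n" _ "Suc n"])
  have ETc: "transpose_mat E \<in> carrier_mat (Suc n) (Suc n)" using E by auto
  have "transpose_mat Q * Q = transpose_mat E * (H * H) * E"
    unfolding QT unfolding Q_def using H E ETc by (simp add: assoc_mult_mat[of _ "Suc n" "Suc n" _ "Suc n" _ "Suc n"])
  also have "\<dots> = ext 1 (transpose_mat Q3 * Q3)" unfolding HH ET unfolding E_def using Q3
    by (simp add: ext_mult[of _ n n _ n])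
  also have "\<dots> = 1\<^sub>m (Suc n)" unfolding Q3O ext_one ..
  finally have QQ: "transpose_mat Q * Q = 1\<^sub>m (Suc n)" .
  have "transpose_mat Q * A * Q = transpose_mat E * C * E"
    unfolding QT unfolding Q_def C_def using H E ETc A by (simp add: assoc_mult_mat[of _ "Suc n" "Suc n" _ "Suc n" _ "Suc n"])
  also have "\<dots> = ext (1*e*1) (transpose_mat Q3 * C3 * Q3)" unfolding Cext ET unfolding E_def using Q3 C3
    by (simp add: ext_mult[of _ n n _ n])
  finally have "diagonal_mat (transpose_mat Q * A * Q)" using ext_diag[OF Q3d] by simp
  with Q QQ show ?case by blast
qed


definition psd :: "nat \<Rightarrow> real mat \<Rightarrow> bool" where
  "psd n A \<longleftrightarrow> (\<forall>v\<in>carrier_vec n. v \<bullet> (A *\<^sub>v v) \<ge> 0)"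

lemma orth_right: assumes Q: "(Q::real mat) \<in> carrier_mat n n" and QQ: "transpose_mat Q * Q = 1\<^sub>m n"
  shows "Q * transpose_mat Q = 1\<^sub>m n"
  using mat_mult_left_right_inverse[OF _ Q QQ] Q by auto

lemma sqrt_exists:
  assumes A: "(A::real mat) \<in> carrier_mat n n" and sym: "transpose_mat A = A" and ps: "psd n A"
  shows "\<exists>B \<in> carrier_mat n n. transpose_mat B = B \<and> psd n B \<and> B * B = A"
proof -
  obtain Q where Q: "Q \<in> carrier_mat n n" and QQ: "transpose_mat Q * Q = 1\<^sub>m n"
    and Dd: "diagonal_mat (transpose_mat Q * A * Q)" using spectral[OF A sym] by blast
  have QT: "transpose_mat Q \<in> carrier_mat n n" using Q by auto
  have QQ': "Q * transpose_mat Q = 1\<^sub>m n" by (rule orth_right[OF Q QQ])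
  define D where "D = transpose_mat Q * A * Q"
  have D: "D \<in> carrier_mat n n" unfolding D_def using Q A by auto
  have AQ: "A = Q * D * transpose_mat Q"
  proof -
    have "Q * D * transpose_mat Q = (Q * transpose_mat Q) * A * (Q * transpose_mat Q)"
      unfolding D_def using Q QT A by (simp add: assoc_mult_mat[of _ n n _ n _ n])
    thus ?thesis unfolding QQ' using A by simp
  qed
  have Dnn: "D $$ (k,k) \<ge> 0" if k: "k < n" for k
  proof -
    let ?e = "unit_vec n k"
    have e: "?e \<in> carrier_vec n" by simp
    have "D $$ (k,k) = ?e \<bullet> (D *\<^sub>v ?e)" using D k by simp
    also have "D *\<^sub>v ?e = transpose_mat Q *\<^sub>v (A *\<^sub>v (Q *\<^sub>v ?e))"
      unfolding D_def using Q QT A e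
      by (simp add: assoc_mult_mat_vec[of _ n n _ n] del: assoc_mult_mat)
    also have "?e \<bullet> \<dots> = (transpose_mat Q *\<^sub>v (A *\<^sub>v (Q *\<^sub>v ?e))) \<bullet> ?e"
      using Q A by (intro comm_scalar_prod[of _ n]) auto
    also have "\<dots> = (A *\<^sub>v (Q *\<^sub>v ?e)) \<bullet> (Q *\<^sub>v ?e)"
      using Q A by (intro transpose_vec_mult_scalar[of _ n n]) auto
    also have "\<dots> = (Q *\<^sub>v ?e) \<bullet> (A *\<^sub>v (Q *\<^sub>v ?e))"
      using Q A by (intro comm_scalar_prod[of _ n]) auto
    finally show ?thesis using ps Q unfolding psd_def by auto
  qed
  define E where "E = mat n n (\<lambda>(i,j). if i = j then sqrt (D $$ (i,i)) else 0)"
  have E: "E \<in> carrier_mat n n" unfolding E_def by auto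
  have ET: "transpose_mat E = E" unfolding E_def by (rule eq_matI) auto
  have EE: "E * E = D"
  proof (rule eq_matI)
    fix i j assume i: "i < dim_row D" and j: "j < dim_col D"
    have "(E * E) $$ (i,j) = (\<Sum>l<n. E $$ (i,l) * E $$ (l,j))"
      using i j D E by (simp add: scalar_prod_def atLeast0LessThan row_def col_def)
    also have "\<dots> = (\<Sum>l<n. if l = i then (if i = j then D $$ (i,i) else 0) else 0)"
      using i j D Dnn by (intro sum.cong) (auto simp: E_def)
    also have "\<dots> = D $$ (i,j)" using i j D Dd unfolding D_def[symmetric] diagonal_mat_def by auto
    finally show "(E * E) $$ (i,j) = D $$ (i,j)" .
  qed (use D E in auto)
  define B where "B = Q * E * transpose_mat Q"
  have B: "B \<in> carrier_mat n n" unfolding B_def using Q E by auto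
  have BT: "transpose_mat B = B" unfolding B_def using Q E ET
    by (simp add: transpose_mult[of _ n n _ n] assoc_mult_mat[of _ n n _ n _ n])
  have BB: "B * B = A"
  proof -
    have "B * B = Q * E * (transpose_mat Q * Q) * E * transpose_mat Q"
      unfolding B_def using Q QT E by (simp add: assoc_mult_mat[of _ n n _ n _ n])
    also have "\<dots> = Q * (E * E) * transpose_mat Q"
      unfolding QQ using Q QT E by (simp add: assoc_mult_mat[of _ n n _ n _ n])
    finally show ?thesis unfolding EE AQ[symmetric] .
  qed
  have Bp: "psd n B" unfolding psd_def
  proof
    fix v :: "real vec" assume v: "v \<in> carrier_vec n"
    define z where "z = transpose_mat Q *\<^sub>v v"
    have z: "z \<in> carrier_vec n" unfolding z_def using QT v by auto
    have "B *\<^sub>v v = Q *\<^sub>v (E *\<^sub>v z)" unfolding B_def z_def using Q QT E v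
      by (simp add: assoc_mult_mat_vec[of _ n n _ n] del: assoc_mult_mat)
    hence "v \<bullet> (B *\<^sub>v v) = z \<bullet> (E *\<^sub>v z)"
      using transpose_vec_mult_scalar[of Q n n "E *\<^sub>v z" v] Q E z v by (simp add: z_def[symmetric])
    also have "\<dots> = (\<Sum>k<n. z$k * (sqrt (D $$ (k,k)) * z$k))"
    proof -
      have "\<And>k. k < n \<Longrightarrow> (E *\<^sub>v z) $ k = sqrt (D $$ (k,k)) * z$k"
      proof -
        fix k assume k: "k < n"
        have "(E *\<^sub>v z) $ k = (\<Sum>l<n. E $$ (k,l) * z$l)"
          using k E z by (simp add: scalar_prod_def atLeast0LessThan row_def)
        also have "\<dots> = (\<Sum>l<n. if l = k then sqrt (D $$ (k,k)) * z$k else 0)"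
          using k by (intro sum.cong) (auto simp: E_def)
        finally show "(E *\<^sub>v z) $ k = sqrt (D $$ (k,k)) * z$k" using k by simp
      qed
      thus ?thesis using z E by (simp add: scalar_prod_def atLeast0LessThan)
    qed
    also have "\<dots> \<ge> 0"
    proof (intro sum_nonneg)
      fix k assume "k \<in> {..<n}"
      hence "sqrt (D $$ (k,k)) \<ge> 0" using Dnn by auto
      thus "z$k * (sqrt (D $$ (k,k)) * z$k) \<ge> 0"
        by (metis mult.left_commute mult_nonneg_nonneg zero_le_square)
    qed
    finally show "v \<bullet> (B *\<^sub>v v) \<ge> 0" .
  qed
  show ?thesis using B BT Bp BB by blast
qed


lemma sqrt_unique:
  assumes B: "(B::real mat) \<in> carrier_mat n n" and B': "B' \<in> carrier_mat n n"
    and BT: "transpose_mat B = B" and B'T: "transpose_mat B' = B'"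
    and Bp: "psd n B" and B'p: "psd n B'" and BB: "B * B = B' * B'"
  shows "B = B'"
proof -
  obtain Q where Q: "Q \<in> carrier_mat n n" and QQ: "transpose_mat Q * Q = 1\<^sub>m n"
    and Ld: "diagonal_mat (transpose_mat Q * B' * Q)" using spectral[OF B' B'T] by blast
  have QT: "transpose_mat Q \<in> carrier_mat n n" using Q by auto
  have QQ': "Q * transpose_mat Q = 1\<^sub>m n" by (rule orth_right[OF Q QQ])
  define L where "L = transpose_mat Q * B' * Q"
  have L: "L \<in> carrier_mat n n" unfolding L_def using Q B' by auto
  have B'Q: "B' * Q = Q * L"
  proof -
    have "Q * L = (Q * transpose_mat Q) * B' * Q"
      unfolding L_def using Q QT B' by (simp add: assoc_mult_mat[of _ n n _ n _ n])
    thus ?thesis unfolding QQ' using B' Q by simp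
  qed
  have colk: "B *\<^sub>v col Q k = B' *\<^sub>v col Q k" if k: "k < n" for k
  proof -
    define x where "x = col Q k"
    define \<mu> where "\<mu> = L $$ (k,k)"
    have x: "x \<in> carrier_vec n" unfolding x_def using Q by auto
    have xx: "x \<bullet> x = 1"
    proof -
      have "(transpose_mat Q * Q) $$ (k,k) = x \<bullet> x" unfolding x_def using Q QT k by simp
      thus ?thesis unfolding QQ using k by simp
    qed
    have colL: "col L k = \<mu> \<cdot>\<^sub>v unit_vec n k"
      by (rule eq_vecI) (use L k Ld in \<open>auto simp: \<mu>_def L_def[symmetric] diagonal_mat_def\<close>)
    have Bx': "B' *\<^sub>v x = \<mu> \<cdot>\<^sub>v x"
    proof -
      have "B' *\<^sub>v x = col (B' * Q) k" unfolding x_def using B' Q k by simp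
      also have "\<dots> = Q *\<^sub>v col L k" unfolding B'Q using Q L k by simp
      also have "\<dots> = \<mu> \<cdot>\<^sub>v (Q *\<^sub>v unit_vec n k)" unfolding colL using Q by (simp add: mult_mat_vec)
      also have "Q *\<^sub>v unit_vec n k = x" unfolding x_def using Q k
        by (intro eq_vecI) auto
      finally show ?thesis .
    qed
    have mu0: "\<mu> \<ge> 0"
    proof -
      have "x \<bullet> (B' *\<^sub>v x) \<ge> 0" using B'p x unfolding psd_def by auto
      thus ?thesis unfolding Bx' using xx x by simp
    qed
    define y where "y = B *\<^sub>v x - \<mu> \<cdot>\<^sub>v x"
    have y: "y \<in> carrier_vec n" unfolding y_def using B x by auto
    have BBx: "B *\<^sub>v (B *\<^sub>v x) = \<mu> \<cdot>\<^sub>v (\<mu> \<cdot>\<^sub>v x)"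
    proof -
      have "B *\<^sub>v (B *\<^sub>v x) = (B * B) *\<^sub>v x" using B x by (simp add: assoc_mult_mat_vec)
      also have "\<dots> = B' *\<^sub>v (B' *\<^sub>v x)" unfolding BB using B' x by (simp add: assoc_mult_mat_vec)
      also have "\<dots> = \<mu> \<cdot>\<^sub>v (\<mu> \<cdot>\<^sub>v x)" unfolding Bx' using B' x by (simp add: mult_mat_vec Bx')
      finally show ?thesis .
    qed
    have By: "B *\<^sub>v y = (- \<mu>) \<cdot>\<^sub>v y"
    proof -
      have "B *\<^sub>v y = B *\<^sub>v (B *\<^sub>v x) - \<mu> \<cdot>\<^sub>v (B *\<^sub>v x)"
        unfolding y_def using B x by (simp add: mult_minus_distrib_mat_vec[of _ n n] mult_mat_vec)
      also have "\<dots> = (- \<mu>) \<cdot>\<^sub>v y" unfolding BBx y_def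
        by (rule eq_vecI) (use B x in \<open>auto simp: algebra_simps\<close>)
      finally show ?thesis .
    qed
    have "y \<bullet> (B *\<^sub>v y) \<ge> 0" using Bp y unfolding psd_def by auto
    hence "- \<mu> * (y \<bullet> y) \<ge> 0" unfolding By using y by simp
    moreover have "\<mu> * (y \<bullet> y) \<ge> 0" using mu0 self_sprod_nonneg[of y] by simp
    ultimately have "\<mu> * (y \<bullet> y) = 0" by linarith
    hence "\<mu> = 0 \<or> y \<bullet> y = 0" by simp
    hence "y = 0\<^sub>v n"
    proof
      assume "y \<bullet> y = 0" thus ?thesis using self_sprod_zero[of y] y by auto
    next
      assume m: "\<mu> = 0"
      have "(B *\<^sub>v x) \<bullet> (B *\<^sub>v x) = x \<bullet> (B *\<^sub>v (B *\<^sub>v x))"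
        using transpose_vec_mult_scalar[of B n n "B *\<^sub>v x" x] B x BT by simp
      also have "\<dots> = 0" unfolding BBx m using x by simp
      finally have "B *\<^sub>v x = 0\<^sub>v n" using self_sprod_zero[of "B *\<^sub>v x"] B by auto
      thus ?thesis unfolding y_def m using x by auto
    qed
    hence "B *\<^sub>v x = \<mu> \<cdot>\<^sub>v x"
    proof -
      assume y0: "y = 0\<^sub>v n"
      show ?thesis
      proof (rule eq_vecI)
        fix i assume "i < dim_vec (\<mu> \<cdot>\<^sub>v x)"
        hence i: "i < n" using x by auto
        have "y $ i = 0" using y0 i by simp
        thus "(B *\<^sub>v x) $ i = (\<mu> \<cdot>\<^sub>v x) $ i" unfolding y_def using i B x by simp
      qed (use B x in auto)
    qed
    thus ?thesis unfolding x_def[symmetric] Bx' .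
  qed
  have "B * Q = B' * Q"
    by (rule mat_col_eqI) (use B B' Q colk in auto)
  hence "B * Q * transpose_mat Q = B' * Q * transpose_mat Q" by simp
  thus ?thesis using B B' Q QT QQ' by (simp add: assoc_mult_mat[of _ n n _ n _ n])
qed

lemma cov_sym: "transpose_mat (cov_mat b f m f m) = cov_mat b f m f m"
  unfolding cov_mat_def by (rule eq_matI) (auto simp: mult.commute)

lemma cov_psd:
  fixes b :: "'a measure" and \<phi> :: "'a \<Rightarrow> real vec"
  assumes ps: "prob_space b" and meas: "\<And>k. k < r \<Longrightarrow> (\<lambda>x. \<phi> x $ k) \<in> borel_measurable b"
   and sq: "\<And>k. k<r \<Longrightarrow> integrable b (\<lambda>x. (\<phi> x $ k)^2)"
   and v: "v \<in> carrier_vec r"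
  shows "v \<bullet> (cov_mat b \<phi> r \<phi> r *\<^sub>v v) \<ge> 0"
proof -
  interpret prob_space b by (rule ps)
  define f where "f = (\<lambda>k x. \<phi> x $ k)"
  define m where "m = (\<lambda>k. \<integral>x. f k x \<partial>b)"
  define g where "g = (\<lambda>k x. f k x - m k)"
  have fm: "f k \<in> borel_measurable b" if "k < r" for k using meas that unfolding f_def by auto
  have fi: "integrable b (f k)" if "k < r" for k
    using square_integrable_imp_integrable[OF fm[OF that]] sq[OF that] unfolding f_def by auto
  have ffi: "integrable b (\<lambda>x. f k x * f l x)" if "k < r" "l < r" for k l
  proof (rule Bochner_Integration.integrable_bound[where f="\<lambda>x. (f k x)^2 + (f l x)^2"])
    show "integrable b (\<lambda>x. (f k x)^2 + (f l x)^2)" using sq that unfolding f_def by auto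
    show "(\<lambda>x. f k x * f l x) \<in> borel_measurable b" using fm that by auto
    show "AE x in b. norm (f k x * f l x) \<le> norm ((f k x)^2 + (f l x)^2)"
    proof (rule AE_I2)
      fix x
      have "\<bar>f k x * f l x\<bar> \<le> (f k x)^2 + (f l x)^2"
        by (smt (verit) abs_mult sum_squares_bound abs_ge_zero real_sqrt_abs power2_abs
            zero_le_power2 abs_le_square_iff  mult_mono abs_mult_self_eq power2_eq_square)
      thus "norm (f k x * f l x) \<le> norm ((f k x)^2 + (f l x)^2)" by simp
    qed
  qed
  have ggi: "integrable b (\<lambda>x. g k x * g l x)" and ggI: "(\<integral>x. g k x * g l x \<partial>b) = (\<integral>x. f k x * f l x \<partial>b) - m k * m l"
    if "k < r" "l < r" for k l
  proof -
    have eq: "(\<lambda>x. g k x * g l x) = (\<lambda>x. f k x * f l x - m k * f l x - m l * f k x + m k * m l)"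
      unfolding g_def by (auto simp: algebra_simps)
    show "integrable b (\<lambda>x. g k x * g l x)" unfolding eq using fi ffi that by auto
    show "(\<integral>x. g k x * g l x \<partial>b) = (\<integral>x. f k x * f l x \<partial>b) - m k * m l" unfolding eq
      using fi ffi that by (simp add: m_def prob_space algebra_simps)
  qed
  let ?A = "cov_mat b \<phi> r \<phi> r"
  have Aent: "?A $$ (k,l) = (\<integral>x. g k x * g l x \<partial>b)" if "k < r" "l < r" for k l
    using that ggI unfolding cov_mat_def f_def m_def by simp
  have "v \<bullet> (?A *\<^sub>v v) = (\<Sum>k<r. v$k * (\<Sum>l<r. ?A $$ (k,l) * v$l))"
    using v unfolding cov_mat_def by (simp add: scalar_prod_def atLeast0LessThan row_def)
  also have "\<dots> = (\<Sum>k<r. \<Sum>l<r. \<integral>x. v$k * v$l * (g k x * g l x) \<partial>b)"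
    by (intro sum.cong refl) (simp add: Aent sum_distrib_left ac_simps)
  also have "\<dots> = (\<Sum>k<r. \<integral>x. (\<Sum>l<r. v$k * v$l * (g k x * g l x)) \<partial>b)"
    by (rule sum.cong[OF refl], subst Bochner_Integration.integral_sum) (auto intro!: integrable_mult_right ggi)
  also have "\<dots> = (\<integral>x. (\<Sum>k<r. \<Sum>l<r. v$k * v$l * (g k x * g l x)) \<partial>b)"
    by (subst Bochner_Integration.integral_sum) (auto intro!: integrable_sum integrable_mult_right ggi)
  also have "\<dots> = (\<integral>x. (\<Sum>k<r. v$k * g k x)^2 \<partial>b)"
    by (simp add: power2_eq_square sum_product ac_simps)
  also have "\<dots> \<ge> 0" by simp
  finally show ?thesis .
qed

lemma vec_sum_mult:
  assumes D: "(D::complex mat) \<in> carrier_mat m m" and vs: "\<And>e. e \<in> S \<Longrightarrow> vs e \<in> carrier_vec m"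
  shows "vec m (\<lambda>k. \<Sum>e\<in>S. (D *\<^sub>v vs e) $ k) = D *\<^sub>v vec m (\<lambda>l. \<Sum>e\<in>S. vs e $ l)"
proof (rule eq_vecI)
  fix k assume "k < dim_vec (D *\<^sub>v vec m (\<lambda>l. \<Sum>e\<in>S. vs e $ l))"
  hence k: "k < m" using D by auto
  have "(\<Sum>e\<in>S. (D *\<^sub>v vs e) $ k) = (\<Sum>e\<in>S. \<Sum>l<m. D $$ (k,l) * vs e $ l)"
  proof (rule sum.cong[OF refl])
    fix e assume "e \<in> S"
    hence "dim_vec (vs e) = m" using vs by auto
    thus "(D *\<^sub>v vs e) $ k = (\<Sum>l<m. D $$ (k,l) * vs e $ l)"
      using D k by (simp add: scalar_prod_def atLeast0LessThan row_def)
  qed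
  also have "\<dots> = (\<Sum>l<m. D $$ (k,l) * (\<Sum>e\<in>S. vs e $ l))"
    by (subst sum.swap) (simp add: sum_distrib_left)
  also have "\<dots> = (D *\<^sub>v vec m (\<lambda>l. \<Sum>e\<in>S. vs e $ l)) $ k"
    using D k by (simp add: scalar_prod_def atLeast0LessThan row_def)
  finally show "vec m (\<lambda>k. \<Sum>e\<in>S. (D *\<^sub>v vs e) $ k) $ k = (D *\<^sub>v vec m (\<lambda>l. \<Sum>e\<in>S. vs e $ l)) $ k"
    using k by simp
qed (use D in auto)

lemma M_eig_sim:
  assumes Dc: "\<And>e. e \<in> dedges F \<Longrightarrow> D (snd e) \<in> carrier_mat (r (snd e)) (r (snd e))"
    and Di: "\<And>e. e \<in> dedges F \<Longrightarrow> Dinv (snd e) * D (snd e) = 1\<^sub>m (r (snd e))"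
    and Dic: "\<And>e. e \<in> dedges F \<Longrightarrow> Dinv (snd e) \<in> carrier_mat (r (snd e)) (r (snd e))"
    and w1c: "\<And>e e'. e \<in> dedges F \<Longrightarrow> e' \<in> dedges F \<Longrightarrow> feeds e' e \<Longrightarrow>
       w1 (fst e) (snd e') (snd e) \<in> carrier_mat (r (snd e)) (r (snd e'))"
    and w2c: "\<And>e e'. e \<in> dedges F \<Longrightarrow> e' \<in> dedges F \<Longrightarrow> feeds e' e \<Longrightarrow>
       w2 (fst e) (snd e') (snd e) \<in> carrier_mat (r (snd e)) (r (snd e'))"
    and rel: "\<And>e e'. e \<in> dedges F \<Longrightarrow> e' \<in> dedges F \<Longrightarrow> feeds e' e \<Longrightarrow>
       w2 (fst e) (snd e') (snd e) * D (snd e') = D (snd e) * w1 (fst e) (snd e') (snd e)"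
    and ev: "M_eigenvalue F r w1 z"
  shows "M_eigenvalue F r w2 z"
proof -
  obtain f where fc: "\<And>e. e \<in> dedges F \<Longrightarrow> f e \<in> carrier_vec (r (snd e))"
    and fnz: "\<exists>e \<in> dedges F. f e \<noteq> 0\<^sub>v (r (snd e))"
    and fe: "\<And>e. e \<in> dedges F \<Longrightarrow> M_op F r w1 f e = z \<cdot>\<^sub>v f e"
    using ev unfolding M_eigenvalue_def by blast
  define g where "g e = D (snd e) *\<^sub>v f e" for e
  have gc: "g e \<in> carrier_vec (r (snd e))" if "e \<in> dedges F" for e
    unfolding g_def using Dc[OF that] fc[OF that] by auto
  have gnz: "\<exists>e \<in> dedges F. g e \<noteq> 0\<^sub>v (r (snd e))"
  proof -
    obtain e where e: "e \<in> dedges F" "f e \<noteq> 0\<^sub>v (r (snd e))" using fnz by blast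
    have "Dinv (snd e) *\<^sub>v g e = f e"
      unfolding g_def using Dc[OF e(1)] Dic[OF e(1)] Di[OF e(1)] fc[OF e(1)]
      by (metis assoc_mult_mat_vec one_mult_mat_vec)
    moreover have "Dinv (snd e) *\<^sub>v 0\<^sub>v (r (snd e)) = 0\<^sub>v (r (snd e))"
      by (rule eq_vecI) (use Dic[OF e(1)] in \<open>auto simp: scalar_prod_def\<close>)
    ultimately have "g e \<noteq> 0\<^sub>v (r (snd e))" using e by auto
    thus ?thesis using e by blast
  qed
  have ge: "M_op F r w2 g e = z \<cdot>\<^sub>v g e" if e: "e \<in> dedges F" for e
  proof -
    let ?S = "{e' \<in> dedges F. feeds e' e}"
    have "M_op F r w2 g e = vec (r (snd e)) (\<lambda>k. \<Sum>e'\<in>?S. (D (snd e) *\<^sub>v (w1 (fst e) (snd e') (snd e) *\<^sub>v f e')) $ k)"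
      unfolding M_op_def
    proof (intro arg_cong[where f="vec _"] ext sum.cong refl)
      fix k e' assume "e' \<in> ?S"
      hence e': "e' \<in> dedges F" "feeds e' e" by auto
      have "w2 (fst e) (snd e') (snd e) *\<^sub>v g e' = (w2 (fst e) (snd e') (snd e) * D (snd e')) *\<^sub>v f e'"
        unfolding g_def using w2c[OF e e'(1,2)] Dc[OF e'(1)] fc[OF e'(1)] by (simp add: assoc_mult_mat_vec)
      also have "\<dots> = D (snd e) *\<^sub>v (w1 (fst e) (snd e') (snd e) *\<^sub>v f e')"
        unfolding rel[OF e e'(1,2)] using w1c[OF e e'(1,2)] Dc[OF e] fc[OF e'(1)] by (simp add: assoc_mult_mat_vec)
      finally show "(w2 (fst e) (snd e') (snd e) *\<^sub>v g e') $ k = (D (snd e) *\<^sub>v (w1 (fst e) (snd e') (snd e) *\<^sub>v f e')) $ k"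
        by simp
    qed
    also have "\<dots> = D (snd e) *\<^sub>v M_op F r w1 f e"
      unfolding M_op_def
    proof (rule vec_sum_mult[OF Dc[OF e]])
      fix e' assume "e' \<in> ?S"
      hence e': "e' \<in> dedges F" "feeds e' e" by auto
      show "w1 (fst e) (snd e') (snd e) *\<^sub>v f e' \<in> carrier_vec (r (snd e))"
        using w1c[OF e e'] fc[OF e'(1)] by auto
    qed
    also have "\<dots> = z \<cdot>\<^sub>v g e" unfolding fe[OF e] g_def using Dc[OF e] fc[OF e] by (simp add: mult_mat_vec)
    finally show ?thesis .
  qed
  show ?thesis unfolding M_eigenvalue_def using gc gnz ge by blast
qed


lemma psd_sqrt_props:
  assumes A: "(A::real mat) \<in> carrier_mat n n" and sym: "transpose_mat A = A" and ps: "psd n A"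
  shows "psd_sqrt A \<in> carrier_mat n n \<and> transpose_mat (psd_sqrt A) = psd_sqrt A \<and> psd_sqrt A * psd_sqrt A = A"
proof -
  have dr: "dim_row A = n" using A by auto
  let ?P = "\<lambda>B. B \<in> carrier_mat n n \<and> transpose_mat B = B \<and>
        (\<forall>v \<in> carrier_vec n. v \<bullet> (B *\<^sub>v v) \<ge> 0) \<and> B * B = A"
  have ex: "\<exists>B. ?P B" using sqrt_exists[OF A sym ps] unfolding psd_def by blast
  have un: "B = B'" if "?P B" "?P B'" for B B'
    using sqrt_unique[of B n B'] that unfolding psd_def by auto
  obtain B0 where B0: "?P B0" using ex by blast
  have ex1: "\<exists>!B. ?P B"
  proof (rule ex1I[of _ B0])
    show "?P B0" by (rule B0)
    fix B assume "?P B" thus "B = B0" using un B0 by blast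
  qed
  have "?P (psd_sqrt A)" unfolding psd_sqrt_def dr
    by (rule theI'[OF ex1])
  thus ?thesis by blast
qed

lemma mat_inv_eq:
  assumes A: "(A::real mat) \<in> carrier_mat n n" and B: "B \<in> carrier_mat n n"
    and AB: "A * B = 1\<^sub>m n" and BA: "B * A = 1\<^sub>m n"
  shows "mat_inv A = B"
proof -
  have dr: "dim_row A = n" using A by auto
  let ?P = "\<lambda>B. B \<in> carrier_mat n n \<and> A * B = 1\<^sub>m n \<and> B * A = 1\<^sub>m n"
  have un: "B' = B" if "?P B'" for B'
  proof -
    have B'c: "B' \<in> carrier_mat n n" using that by auto
    have "B' = B' * (A * B)" using AB right_mult_one_mat[OF B'c] by simp
    also have "\<dots> = (B' * A) * B" by (rule assoc_mult_mat[symmetric]) (use B'c A B in auto)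
    also have "\<dots> = B" using that left_mult_one_mat[OF B] by simp
    finally show ?thesis .
  qed
  have PB: "?P B" using B AB BA by blast
  show ?thesis unfolding mat_inv_def dr
    by (rule the_equality[of ?P B, OF PB un])
qed

theorem lemma1:
  fixes V :: "'v set" and F :: "'v set set"
    and M :: "'v \<Rightarrow> 'x measure"                     \<comment> \<open>measurable spaces \<open>X_i\<close>\<close>
    and \<nu> :: "'v \<Rightarrow> 'x measure"                     \<comment> \<open>base measures of \<open>E_i\<close>\<close>
    and \<nu>F :: "'v set \<Rightarrow> ('v \<Rightarrow> 'x) measure"       \<comment> \<open>base measures of \<open>E_\<alpha>\<close>\<close>
    and r :: "'v \<Rightarrow> nat" and \<phi> :: "'v \<Rightarrow> 'x \<Rightarrow> real vec"
    and s :: "'v set \<Rightarrow> nat" and \<phi>bar :: "'v set \<Rightarrow> ('v \<Rightarrow> 'x) \<Rightarrow> real vec"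
    and bF :: "'v set \<Rightarrow> ('v \<Rightarrow> 'x) measure" and bV :: "'v \<Rightarrow> 'x measure"
    and u c :: "'v set \<Rightarrow> 'v \<Rightarrow> 'v \<Rightarrow> complex mat"
  assumes hyp: "finite V" "F \<subseteq> Pow V" "finite F"
    and base_i: "\<And>i. i \<in> V \<Longrightarrow> sets (\<nu> i) = sets (M i)"
    and base_F: "\<And>\<alpha>. \<alpha> \<in> F \<Longrightarrow> sets (\<nu>F \<alpha>) = sets (PiM \<alpha> M)"
    and stat_i: "\<And>i x. i \<in> V \<Longrightarrow> \<phi> i x \<in> carrier_vec (r i)"
    and stat_i_meas: "\<And>i k. i \<in> V \<Longrightarrow> k < r i \<Longrightarrow> (\<lambda>x. \<phi> i x $ k) \<in> borel_measurable (M i)"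
    and stat_F: "\<And>\<alpha> x. \<alpha> \<in> F \<Longrightarrow> \<phi>bar \<alpha> x \<in> carrier_vec (s \<alpha>)"
    and stat_F_meas: "\<And>\<alpha> k. \<alpha> \<in> F \<Longrightarrow> k < s \<alpha> \<Longrightarrow> (\<lambda>x. \<phi>bar \<alpha> x $ k) \<in> borel_measurable (PiM \<alpha> M)"
    and mem_i: "\<And>i. i \<in> V \<Longrightarrow> in_expfam (\<nu> i) (\<phi> i) (r i) (bV i)"
    and mem_F: "\<And>\<alpha>. \<alpha> \<in> F \<Longrightarrow> in_expfam_factor (\<nu>F \<alpha>) (\<phi>bar \<alpha>) (s \<alpha>) \<alpha> \<phi> r (bF \<alpha>)"
    and sq_int: "\<And>i k. i \<in> V \<Longrightarrow> k < r i \<Longrightarrow> integrable (bV i) (\<lambda>x. (\<phi> i x $ k)\<^sup>2)"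
    and var_inv: "\<And>i. i \<in> V \<Longrightarrow> invertible_mat (cov_mat (bV i) (\<phi> i) (r i) (\<phi> i) (r i))"
    and marg: "\<And>\<alpha> i. \<alpha> \<in> F \<Longrightarrow> i \<in> \<alpha> \<Longrightarrow> distr (bF \<alpha>) (M i) (\<lambda>x. x i) = bV i"
    and u_def: "\<And>\<alpha> i j. \<alpha> \<in> F \<Longrightarrow> i \<in> \<alpha> \<Longrightarrow> j \<in> \<alpha> \<Longrightarrow> i \<noteq> j \<Longrightarrow>
       u \<alpha> i j = map_mat complex_of_real
         (mat_inv (cov_mat (bV j) (\<phi> j) (r j) (\<phi> j) (r j)) *
          cov_mat (bF \<alpha>) (\<lambda>x. \<phi> j (x j)) (r j) (\<lambda>x. \<phi> i (x i)) (r i))"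
    and c_def: "\<And>\<alpha> i j. \<alpha> \<in> F \<Longrightarrow> i \<in> \<alpha> \<Longrightarrow> j \<in> \<alpha> \<Longrightarrow> i \<noteq> j \<Longrightarrow>
       c \<alpha> i j = map_mat complex_of_real
         (inv_sqrt (cov_mat (bF \<alpha>) (\<lambda>x. \<phi> j (x j)) (r j) (\<lambda>x. \<phi> j (x j)) (r j)) *
          cov_mat (bF \<alpha>) (\<lambda>x. \<phi> j (x j)) (r j) (\<lambda>x. \<phi> i (x i)) (r i) *
          inv_sqrt (cov_mat (bF \<alpha>) (\<lambda>x. \<phi> i (x i)) (r i) (\<lambda>x. \<phi> i (x i)) (r i)))"
  shows "{z. M_eigenvalue F r u z} = {z. M_eigenvalue F r c z}"
proof -
  define A where "A i = cov_mat (bV i) (\<phi> i) (r i) (\<phi> i) (r i)" for i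
  have Ac: "A i \<in> carrier_mat (r i) (r i)" for i unfolding A_def cov_mat_def by auto
  have AT: "transpose_mat (A i) = A i" for i unfolding A_def by (rule cov_sym)
  have setsV: "sets (bV i) = sets (M i)" if i: "i \<in> V" for i
  proof -
    from mem_i[OF i] obtain \<theta> c0 where "bV i = density (\<nu> i) (\<lambda>x. ennreal (exp (\<theta> \<bullet> \<phi> i x - c0)))"
      unfolding in_expfam_def by blast
    thus ?thesis using base_i[OF i] by simp
  qed
  have Ap: "psd (r i) (A i)" if i: "i \<in> V" for i
    unfolding psd_def A_def
  proof
    fix v :: "real vec" assume v: "v \<in> carrier_vec (r i)"
    show "v \<bullet> (cov_mat (bV i) (\<phi> i) (r i) (\<phi> i) (r i) *\<^sub>v v) \<ge> 0"
    proof (rule cov_psd[OF _ _ _ v])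
      show "prob_space (bV i)" using mem_i[OF i] unfolding in_expfam_def by blast
      show "(\<lambda>x. \<phi> i x $ k) \<in> borel_measurable (bV i)" if "k < r i" for k
        using stat_i_meas[OF i that] measurable_cong_sets[OF setsV[OF i] refl] by blast
      show "integrable (bV i) (\<lambda>x. (\<phi> i x $ k)\<^sup>2)" if "k < r i" for k using sq_int[OF i that] .
    qed
  qed
  define S where "S i = psd_sqrt (A i)" for i
  have Sp: "S i \<in> carrier_mat (r i) (r i) \<and> transpose_mat (S i) = S i \<and> S i * S i = A i" if i: "i \<in> V" for i
    unfolding S_def by (rule psd_sqrt_props[OF Ac AT Ap[OF i]])
  have Sc: "S i \<in> carrier_mat (r i) (r i)" and SS: "S i * S i = A i" if "i \<in> V" for i
    using Sp[OF that] by auto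
  have Sinv: "\<exists>T. T \<in> carrier_mat (r i) (r i) \<and> S i * T = 1\<^sub>m (r i) \<and> T * S i = 1\<^sub>m (r i)" if i: "i \<in> V" for i
  proof -
    obtain B where AB: "A i * B = 1\<^sub>m (r i)" and BA: "B * A i = 1\<^sub>m (dim_row B)"
      using var_inv[OF i] Ac[of i] unfolding A_def[symmetric] invertible_mat_def inverts_mat_def by auto
    have "dim_col B = r i" using arg_cong[OF AB, of dim_col] Ac[of i] by simp
    moreover have "dim_row B = r i" using arg_cong[OF BA, of dim_col] Ac[of i] by simp
    ultimately have B: "B \<in> carrier_mat (r i) (r i)" by auto
    define T where "T = S i * B"
    have T: "T \<in> carrier_mat (r i) (r i)" unfolding T_def using Sc[OF i] B by auto
    have ST: "S i * T = 1\<^sub>m (r i)" unfolding T_def using Sc[OF i] B AB SS[OF i]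
      by (simp add: assoc_mult_mat[of _ "r i" "r i" _ "r i" _ "r i", symmetric])
    have TS: "T * S i = 1\<^sub>m (r i)" using mat_mult_left_right_inverse[OF Sc[OF i] T ST] .
    show ?thesis using T ST TS by blast
  qed
  define T where "T i = mat_inv (S i)" for i
  have Tp: "T i \<in> carrier_mat (r i) (r i) \<and> S i * T i = 1\<^sub>m (r i) \<and> T i * S i = 1\<^sub>m (r i)" if i: "i \<in> V" for i
  proof -
    obtain T' where T': "T' \<in> carrier_mat (r i) (r i)" "S i * T' = 1\<^sub>m (r i)" "T' * S i = 1\<^sub>m (r i)"
      using Sinv[OF i] by blast
    have "T i = T'" unfolding T_def using mat_inv_eq[OF Sc[OF i] T'] .
    thus ?thesis using T' by simp
  qed
  have Tc: "T i \<in> carrier_mat (r i) (r i)" and ST: "S i * T i = 1\<^sub>m (r i)" and TS: "T i * S i = 1\<^sub>m (r i)"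
    if "i \<in> V" for i using Tp[OF that] by auto
  have Ainv: "mat_inv (A i) = T i * T i" if i: "i \<in> V" for i
  proof (rule mat_inv_eq[OF Ac])
    show "T i * T i \<in> carrier_mat (r i) (r i)" by (rule mult_carrier_mat[of _ _ "r i"]) (use Tc[OF i] in auto)
    have Sci: "S i \<in> carrier_mat (r i) (r i)" and Tci: "T i \<in> carrier_mat (r i) (r i)" using Sc[OF i] Tc[OF i] .
    have e1: "S i * S i * (T i * T i) = S i * (S i * (T i * T i))"
      by (rule assoc_mult_mat) (use Sci Tci in auto)
    have e2: "S i * (T i * T i) = (S i * T i) * T i"
      by (rule assoc_mult_mat[symmetric]) (use Sci Tci in auto)
    have "A i * (T i * T i) = S i * ((S i * T i) * T i)"
      unfolding SS[OF i, symmetric] e1 e2 by (rule refl)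
    also have "\<dots> = 1\<^sub>m (r i)"
      by (simp only: ST[OF i] left_mult_one_mat[OF Tci])
    finally show "A i * (T i * T i) = 1\<^sub>m (r i)" .
    have e3: "T i * T i * (S i * S i) = T i * (T i * (S i * S i))"
      by (rule assoc_mult_mat) (use Sci Tci in auto)
    have e4: "T i * (S i * S i) = (T i * S i) * S i"
      by (rule assoc_mult_mat[symmetric]) (use Sci Tci in auto)
    have "T i * T i * A i = T i * ((T i * S i) * S i)"
      unfolding SS[OF i, symmetric] e3 e4 by (rule refl)
    also have "\<dots> = 1\<^sub>m (r i)"
      by (simp only: TS[OF i] left_mult_one_mat[OF Sci])
    finally show "T i * T i * A i = 1\<^sub>m (r i)" .
  qed
  have isq: "inv_sqrt (A i) = T i" for i unfolding inv_sqrt_def T_def S_def ..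
  have covF: "cov_mat (bF \<alpha>) (\<lambda>x. \<phi> i (x i)) (r i) (\<lambda>x. \<phi> i (x i)) (r i) = A i"
    if a: "\<alpha> \<in> F" and i: "i \<in> \<alpha>" for \<alpha> i
  proof -
    have iV: "i \<in> V" using a i hyp(2) by auto
    have setsF: "sets (bF \<alpha>) = sets (PiM \<alpha> M)"
    proof -
      from mem_F[OF a] obtain \<theta>0 \<theta> c0 where
        "bF \<alpha> = density (\<nu>F \<alpha>) (\<lambda>x. ennreal (exp (\<theta>0 \<bullet> \<phi>bar \<alpha> x + (\<Sum>i\<in>\<alpha>. \<theta> i \<bullet> \<phi> i (x i)) - c0)))"
        unfolding in_expfam_factor_def by blast
      thus ?thesis using base_F[OF a] by simp
    qed
    have pm: "(\<lambda>x. x i) \<in> measurable (bF \<alpha>) (M i)"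
    proof -
      have "(\<lambda>x. x i) \<in> measurable (PiM \<alpha> M) (M i)" by (rule measurable_component_singleton[OF i])
      thus ?thesis by (subst measurable_cong_sets[OF setsF refl])
    qed
    have int: "(\<integral>x. h (x i) \<partial>bF \<alpha>) = (\<integral>x. h x \<partial>bV i)" if h: "h \<in> borel_measurable (M i)"
      for h :: "'x \<Rightarrow> real"
      using integral_distr[OF pm h] marg[OF a i] by simp
    have m: "(\<lambda>x. \<phi> i x $ k) \<in> borel_measurable (M i)" if "k < r i" for k using stat_i_meas[OF iV that] .
    have mm: "(\<lambda>x. \<phi> i x $ k * \<phi> i x $ l) \<in> borel_measurable (M i)" if "k < r i" "l < r i" for k l
      using m[OF that(1)] m[OF that(2)] by (rule borel_measurable_times)
    show ?thesis unfolding A_def cov_mat_def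
    proof (rule eq_matI)
      fix k l assume k: "k < dim_row (mat (r i) (r i) (\<lambda>(k, l). (\<integral>x. \<phi> i x $ k * \<phi> i x $ l \<partial>bV i) -
            (\<integral>x. \<phi> i x $ k \<partial>bV i) * (\<integral>x. \<phi> i x $ l \<partial>bV i)))"
        and l: "l < dim_col (mat (r i) (r i) (\<lambda>(k, l). (\<integral>x. \<phi> i x $ k * \<phi> i x $ l \<partial>bV i) -
            (\<integral>x. \<phi> i x $ k \<partial>bV i) * (\<integral>x. \<phi> i x $ l \<partial>bV i)))"
      hence k: "k < r i" and l: "l < r i" by auto
      have i1: "(\<integral>x. \<phi> i (x i) $ k * \<phi> i (x i) $ l \<partial>bF \<alpha>) = (\<integral>x. \<phi> i x $ k * \<phi> i x $ l \<partial>bV i)"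
        using int[OF mm[OF k l]] by simp
      have i2: "(\<integral>x. \<phi> i (x i) $ k \<partial>bF \<alpha>) = (\<integral>x. \<phi> i x $ k \<partial>bV i)"
        using int[OF m[OF k]] by simp
      have i3: "(\<integral>x. \<phi> i (x i) $ l \<partial>bF \<alpha>) = (\<integral>x. \<phi> i x $ l \<partial>bV i)"
        using int[OF m[OF l]] by simp
      show "mat (r i) (r i) (\<lambda>(k, l). (\<integral>x. \<phi> i (x i) $ k * \<phi> i (x i) $ l \<partial>bF \<alpha>) -
            (\<integral>x. \<phi> i (x i) $ k \<partial>bF \<alpha>) * (\<integral>x. \<phi> i (x i) $ l \<partial>bF \<alpha>)) $$ (k, l) =
          mat (r i) (r i) (\<lambda>(k, l). (\<integral>x. \<phi> i x $ k * \<phi> i x $ l \<partial>bV i) -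
            (\<integral>x. \<phi> i x $ k \<partial>bV i) * (\<integral>x. \<phi> i x $ l \<partial>bV i)) $$ (k, l)"
        using k l i1 i2 i3 by simp
    qed auto
  qed
  have edge: "fst e \<in> F \<and> snd e \<in> fst e \<and> snd e' \<in> fst e \<and> snd e' \<noteq> snd e \<and> snd e \<in> V \<and> snd e' \<in> V"
    if "e \<in> dedges F" "e' \<in> dedges F" "feeds e' e" for e e'
    using that hyp(2) unfolding dedges_def feeds_def by (auto simp: Pow_def subset_eq)
  define C where "C \<alpha> i j = cov_mat (bF \<alpha>) (\<lambda>x. \<phi> j (x j)) (r j) (\<lambda>x. \<phi> i (x i)) (r i)" for \<alpha> i j
  have Cc: "C \<alpha> i j \<in> carrier_mat (r j) (r i)" for \<alpha> i j unfolding C_def cov_mat_def by auto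
  have ueq: "u \<alpha> i j = map_mat complex_of_real (T j * T j * C \<alpha> i j)"
    and ceq: "c \<alpha> i j = map_mat complex_of_real (T j * C \<alpha> i j * T i)"
    if "\<alpha> \<in> F" "i \<in> \<alpha>" "j \<in> \<alpha>" "i \<noteq> j" for \<alpha> i j
  proof -
    have "j \<in> V" using that hyp(2) by auto
    thus "u \<alpha> i j = map_mat complex_of_real (T j * T j * C \<alpha> i j)"
      using u_def[OF that] Ainv unfolding A_def C_def by simp
    show "c \<alpha> i j = map_mat complex_of_real (T j * C \<alpha> i j * T i)"
      using c_def[OF that] covF[OF that(1,2)] covF[OF that(1,3)] isq unfolding C_def by simp
  qed
  let ?h = "map_mat complex_of_real"
  have uc: "u (fst e) (snd e') (snd e) \<in> carrier_mat (r (snd e)) (r (snd e'))"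
    and cc: "c (fst e) (snd e') (snd e) \<in> carrier_mat (r (snd e)) (r (snd e'))"
    and rel1: "c (fst e) (snd e') (snd e) * ?h (S (snd e')) = ?h (S (snd e)) * u (fst e) (snd e') (snd e)"
    and rel2: "u (fst e) (snd e') (snd e) * ?h (T (snd e')) = ?h (T (snd e)) * c (fst e) (snd e') (snd e)"
    if ee: "e \<in> dedges F" "e' \<in> dedges F" "feeds e' e" for e e'
  proof -
    obtain \<alpha> i j where ids: "\<alpha> = fst e" "i = snd e'" "j = snd e" by blast
    have h: "\<alpha> \<in> F" "i \<in> \<alpha>" "j \<in> \<alpha>" "i \<noteq> j" "i \<in> V" "j \<in> V" using edge[OF ee] ids by auto
    note cs[simp] = Sc[OF h(5)] Sc[OF h(6)] Tc[OF h(5)] Tc[OF h(6)] Cc[of \<alpha> i j]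
    have cm1[simp]: "T j * T j * C \<alpha> i j \<in> carrier_mat (r j) (r i)"
      using cs by (meson mult_carrier_mat)
    have cm2[simp]: "T j * C \<alpha> i j * T i \<in> carrier_mat (r j) (r i)"
      using cs by (meson mult_carrier_mat)
    show "u (fst e) (snd e') (snd e) \<in> carrier_mat (r (snd e)) (r (snd e'))"
      unfolding ids[symmetric] ueq[OF h(1-4)] by simp
    show "c (fst e) (snd e') (snd e) \<in> carrier_mat (r (snd e)) (r (snd e'))"
      unfolding ids[symmetric] ceq[OF h(1-4)] by simp
    have Sj: "S j \<in> carrier_mat (r j) (r j)" and Si: "S i \<in> carrier_mat (r i) (r i)"
      and Tj: "T j \<in> carrier_mat (r j) (r j)" and Ti: "T i \<in> carrier_mat (r i) (r i)"
      and Ca: "C \<alpha> i j \<in> carrier_mat (r j) (r i)" using cs by auto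
    have TC: "T j * C \<alpha> i j \<in> carrier_mat (r j) (r i)" using Tj Ca by (rule mult_carrier_mat)
    have TT: "T j * T j \<in> carrier_mat (r j) (r j)" using Tj Tj by (rule mult_carrier_mat)
    have CT: "C \<alpha> i j * T i \<in> carrier_mat (r j) (r i)" using Ca Ti by (rule mult_carrier_mat)
    have r1: "T j * C \<alpha> i j * T i * S i = S j * (T j * T j * C \<alpha> i j)"
    proof -
      have "T j * C \<alpha> i j * T i * S i = T j * C \<alpha> i j * (T i * S i)"
        using assoc_mult_mat[OF TC Ti Si] .
      also have "\<dots> = T j * C \<alpha> i j" unfolding TS[OF h(5)] using right_mult_one_mat[OF TC] .
      also have "\<dots> = (S j * T j) * T j * C \<alpha> i j" unfolding ST[OF h(6)] using left_mult_one_mat[OF Tj] by simp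
      also have "(S j * T j) * T j = S j * (T j * T j)" using assoc_mult_mat[OF Sj Tj Tj] .
      also have "S j * (T j * T j) * C \<alpha> i j = S j * (T j * T j * C \<alpha> i j)"
        using assoc_mult_mat[OF Sj TT Ca] .
      finally show ?thesis .
    qed
    have r2: "T j * T j * C \<alpha> i j * T i = T j * (T j * C \<alpha> i j * T i)"
    proof -
      have "T j * T j * C \<alpha> i j * T i = T j * T j * (C \<alpha> i j * T i)" using assoc_mult_mat[OF TT Ca Ti] .
      also have "\<dots> = T j * (T j * (C \<alpha> i j * T i))" using assoc_mult_mat[OF Tj Tj CT] .
      also have "T j * (C \<alpha> i j * T i) = T j * C \<alpha> i j * T i" using assoc_mult_mat[OF Tj Ca Ti, symmetric] .
      finally show ?thesis .
    qed
    show "c (fst e) (snd e') (snd e) * ?h (S (snd e')) = ?h (S (snd e)) * u (fst e) (snd e') (snd e)"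
      unfolding ids[symmetric] ueq[OF h(1-4)] ceq[OF h(1-4)]
      by (simp add: of_real_hom.mat_hom_mult[symmetric, of _ "r j" "r i" _ "r i"]
          of_real_hom.mat_hom_mult[symmetric, of _ "r j" "r j" _ "r i"] r1)
    show "u (fst e) (snd e') (snd e) * ?h (T (snd e')) = ?h (T (snd e)) * c (fst e) (snd e') (snd e)"
      unfolding ids[symmetric] ueq[OF h(1-4)] ceq[OF h(1-4)]
      by (simp add: of_real_hom.mat_hom_mult[symmetric, of _ "r j" "r i" _ "r i"]
          of_real_hom.mat_hom_mult[symmetric, of _ "r j" "r j" _ "r i"] r2)
  qed
  have sndV: "snd e \<in> V" if "e \<in> dedges F" for e using that hyp(2) unfolding dedges_def by (auto simp: Pow_def subset_eq)
  have hS: "?h (S (snd e)) \<in> carrier_mat (r (snd e)) (r (snd e))"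
    and hT: "?h (T (snd e)) \<in> carrier_mat (r (snd e)) (r (snd e))"
    and hTS: "?h (T (snd e)) * ?h (S (snd e)) = 1\<^sub>m (r (snd e))"
    and hST: "?h (S (snd e)) * ?h (T (snd e)) = 1\<^sub>m (r (snd e))"
    if "e \<in> dedges F" for e
  proof -
    have v: "snd e \<in> V" using sndV[OF that] .
    show "?h (S (snd e)) \<in> carrier_mat (r (snd e)) (r (snd e))" using Sc[OF v] by simp
    show "?h (T (snd e)) \<in> carrier_mat (r (snd e)) (r (snd e))" using Tc[OF v] by simp
    show "?h (T (snd e)) * ?h (S (snd e)) = 1\<^sub>m (r (snd e))"
      unfolding of_real_hom.mat_hom_mult[OF Tc[OF v] Sc[OF v], symmetric] TS[OF v] by (rule of_real_hom.mat_hom_one)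
    show "?h (S (snd e)) * ?h (T (snd e)) = 1\<^sub>m (r (snd e))"
      unfolding of_real_hom.mat_hom_mult[OF Sc[OF v] Tc[OF v], symmetric] ST[OF v] by (rule of_real_hom.mat_hom_one)
  qed
  have "M_eigenvalue F r u z \<longleftrightarrow> M_eigenvalue F r c z" for z
  proof
    assume ev1: "M_eigenvalue F r u z"
    show "M_eigenvalue F r c z"
      by (rule M_eig_sim[where F=F and r=r and D="\<lambda>i. ?h (S i)" and Dinv="\<lambda>i. ?h (T i)"])
         ((rule hS; assumption), (rule hTS; assumption), (rule hT; assumption),
          (rule uc; assumption), (rule cc; assumption), (rule rel1; assumption), rule ev1)
  next
    assume ev2: "M_eigenvalue F r c z"
    show "M_eigenvalue F r u z"
      by (rule M_eig_sim[where F=F and r=r and D="\<lambda>i. ?h (T i)" and Dinv="\<lambda>i. ?h (S i)"])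
         ((rule hT; assumption), (rule hST; assumption), (rule hS; assumption),
          (rule cc; assumption), (rule uc; assumption), (rule rel2; assumption), rule ev2)
  qed
  thus ?thesis by auto
qed

end
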